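(* Let $a,c\in\mathbb{C}\setminus\{0\}$ and $b,d\in\mathbb{C}$ with $ad-bc\neq 0$, and let $M(z)=\dfrac{az+b}{cz+d}$. Then $St_M$ has no irrationally indifferent fixed point, and consequently the Fatou set of $St_M$ contains no invariant Siegel disc.
   Context: For a non-constant rational function $f$, Stirling's iterative root-finding method is $St_f(z)=z-\dfrac{f(z)}{f'\big(z-f(z)\big)}$, regarded as a rational self-map of $\widehat{\mathbb{C}}$. A fixed point is irrationally indifferent if its multiplier is $e^{2\pi i\theta}$ with $\theta\in\mathbb{R}\setminus\mathbb{Q}$. An invariant Siegel disc is a Fatou component $U$ with $St_M(U)=U$ on which $St_M$ is conformally conjugate to an irrational rotation of the unit disc. *)

theory Defs
  imports "HOL-Complex_Analysis.Complex_Analysis"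
begin

text \<open>The Riemann sphere is modelled as complex option; None is the point at infinity.\<close>

definition Stirling :: "(complex \<Rightarrow> complex) \<Rightarrow> complex \<Rightarrow> complex" where
  "Stirling f z = z - f z / deriv f (z - f z)"

definition mobius :: "complex \<Rightarrow> complex \<Rightarrow> complex \<Rightarrow> complex \<Rightarrow> complex \<Rightarrow> complex" where
  "mobius a b c d z = (a * z + b) / (c * z + d)"

definition inf_chart :: "complex \<Rightarrow> complex option" where
  "inf_chart w = (if w = 0 then None else Some (1 / w))"

text \<open>Extension of a rational function (given by a formula on C, possibly with
  finitely many removable glitches) to a self-map of the Riemann sphere: the value
  at a point is the limit of the formula there, and infinity if there is no finite limit.\<close>
definition sphere_ext :: "(complex \<Rightarrow> complex) \<Rightarrow> complex option \<Rightarrow> complex option" where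
  "sphere_ext R p = (case p of
      Some z \<Rightarrow> (if \<exists>L. (R \<longlongrightarrow> L) (at z) then Some (Lim (at z) R) else None)
    | None \<Rightarrow> (if \<exists>L. ((\<lambda>w. R (1 / w)) \<longlongrightarrow> L) (at 0)
               then Some (Lim (at 0) (\<lambda>w. R (1 / w))) else None))"

definition fixed_point_multiplier ::
  "(complex option \<Rightarrow> complex option) \<Rightarrow> complex option \<Rightarrow> complex \<Rightarrow> bool" where
  "fixed_point_multiplier F p lam = (F p = p \<and> (case p of
      Some z0 \<Rightarrow> ((\<lambda>z. case F (Some z) of Some v \<Rightarrow> v | None \<Rightarrow> 0)
                    has_field_derivative lam) (at z0)
    | None \<Rightarrow> ((\<lambda>w. case F (inf_chart w) of Some v \<Rightarrow> 1 / v | None \<Rightarrow> 0)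
                    has_field_derivative lam) (at 0)))"

definition irrationally_indifferent_fixed_point ::
  "(complex option \<Rightarrow> complex option) \<Rightarrow> complex option \<Rightarrow> bool" where
  "irrationally_indifferent_fixed_point F p =
     (\<exists>\<theta>::real. \<theta> \<notin> \<rat> \<and>
        fixed_point_multiplier F p (exp (2 * complex_of_real pi * \<i> * complex_of_real \<theta>)))"

definition chordal :: "complex option \<Rightarrow> complex option \<Rightarrow> real" where
  "chordal p q = (case (p, q) of
      (Some z, Some w) \<Rightarrow> 2 * cmod (z - w) / (sqrt (1 + (cmod z)\<^sup>2) * sqrt (1 + (cmod w)\<^sup>2))
    | (Some z, None) \<Rightarrow> 2 / sqrt (1 + (cmod z)\<^sup>2)
    | (None, Some w) \<Rightarrow> 2 / sqrt (1 + (cmod w)\<^sup>2)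
    | (None, None) \<Rightarrow> 0)"

definition sphere_open :: "complex option set \<Rightarrow> bool" where
  "sphere_open U = (\<forall>p\<in>U. \<exists>e>0. \<forall>q. chordal p q < e \<longrightarrow> q \<in> U)"

definition sphere_connected :: "complex option set \<Rightarrow> bool" where
  "sphere_connected U = (\<not> (\<exists>A B. sphere_open A \<and> sphere_open B \<and> U \<subseteq> A \<union> B \<and>
      A \<inter> B \<inter> U = {} \<and> A \<inter> U \<noteq> {} \<and> B \<inter> U \<noteq> {}))"

definition normal_iterates_on ::
  "(complex option \<Rightarrow> complex option) \<Rightarrow> complex option set \<Rightarrow> bool" where
  "normal_iterates_on F V = (\<forall>ns :: nat \<Rightarrow> nat. \<exists>(r :: nat \<Rightarrow> nat) (g :: complex option \<Rightarrow> complex option). strict_mono r \<and>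
      (\<forall>q\<in>V. \<exists>e>0. {x. chordal q x < e} \<subseteq> V \<and>
         (\<forall>\<epsilon>>0. \<exists>N. \<forall>k\<ge>N. \<forall>x. chordal q x < e \<longrightarrow>
              chordal ((F ^^ ns (r k)) x) (g x) < \<epsilon>)))"

definition fatou_set :: "(complex option \<Rightarrow> complex option) \<Rightarrow> complex option set" where
  "fatou_set F = {p. \<exists>V. sphere_open V \<and> p \<in> V \<and> normal_iterates_on F V}"

definition fatou_component ::
  "(complex option \<Rightarrow> complex option) \<Rightarrow> complex option set \<Rightarrow> bool" where
  "fatou_component F U = (U \<noteq> {} \<and> sphere_connected U \<and> U \<subseteq> fatou_set F \<and>
      (\<forall>W. sphere_connected W \<and> W \<subseteq> fatou_set F \<and> U \<subseteq> W \<longrightarrow> W = U))"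

definition sphere_holomorphic_on :: "(complex option \<Rightarrow> complex) \<Rightarrow> complex option set \<Rightarrow> bool" where
  "sphere_holomorphic_on \<phi> U =
     ((\<lambda>z. \<phi> (Some z)) holomorphic_on {z. Some z \<in> U} \<and>
      (\<lambda>w. \<phi> (inf_chart w)) holomorphic_on {w. inf_chart w \<in> U})"

definition invariant_siegel_disc ::
  "(complex option \<Rightarrow> complex option) \<Rightarrow> complex option set \<Rightarrow> bool" where
  "invariant_siegel_disc F U = (fatou_component F U \<and> F ` U = U \<and>
     (\<exists>\<phi> (\<theta>::real). \<theta> \<notin> \<rat> \<and> bij_betw \<phi> U (ball 0 1) \<and> sphere_holomorphic_on \<phi> U \<and>
        (\<forall>p\<in>U. \<phi> (F p) = exp (2 * complex_of_real pi * \<i> * complex_of_real \<theta>) * \<phi> p)))"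

end

theory Submission
  imports Defs
begin


definition chart_cont :: "(complex \<Rightarrow> complex option) \<Rightarrow> bool" where
  "chart_cont \<kappa> \<longleftrightarrow> (\<forall>z \<epsilon>. \<epsilon> > 0 \<longrightarrow> eventually (\<lambda>w. chordal (\<kappa> z) (\<kappa> w) < \<epsilon>) (nhds z))"

lemma open_pre: assumes "chart_cont \<kappa>" "sphere_open X" shows "open {z. \<kappa> z \<in> X}"
proof (rule open_subopen[THEN iffD2], rule ballI)
  fix z assume "z \<in> {z. \<kappa> z \<in> X}"
  then obtain e where e: "e > 0" "\<forall>q. chordal (\<kappa> z) q < e \<longrightarrow> q \<in> X"
    using assms(2) unfolding sphere_open_def by blast
  have "eventually (\<lambda>w. chordal (\<kappa> z) (\<kappa> w) < e) (nhds z)"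
    using assms(1) e(1) unfolding chart_cont_def by blast
  then obtain T where "open T" "z \<in> T" "\<forall>w\<in>T. chordal (\<kappa> z) (\<kappa> w) < e"
    unfolding eventually_nhds by blast
  then show "\<exists>T. open T \<and> z \<in> T \<and> T \<subseteq> {z. \<kappa> z \<in> X}" using e(2) by blast
qed

lemma conn_img: assumes "chart_cont \<kappa>" "connected T" shows "sphere_connected (\<kappa> ` T)"
  unfolding sphere_connected_def
proof
  assume "\<exists>A B. sphere_open A \<and> sphere_open B \<and> \<kappa> ` T \<subseteq> A \<union> B \<and>
      A \<inter> B \<inter> \<kappa> ` T = {} \<and> A \<inter> \<kappa> ` T \<noteq> {} \<and> B \<inter> \<kappa> ` T \<noteq> {}"
  then obtain A B where AB: "sphere_open A" "sphere_open B" "\<kappa> ` T \<subseteq> A \<union> B"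
      "A \<inter> B \<inter> \<kappa> ` T = {}" "A \<inter> \<kappa> ` T \<noteq> {}" "B \<inter> \<kappa> ` T \<noteq> {}" by blast
  have "{z. \<kappa> z \<in> A} \<inter> T = {} \<or> {z. \<kappa> z \<in> B} \<inter> T = {}"
    by (rule connectedD[OF assms(2) open_pre[OF assms(1) AB(1)] open_pre[OF assms(1) AB(2)]])
      (use AB(3,4) in blast)+
  then show False using AB(5,6) by blast
qed

lemma conn_union: assumes "sphere_connected A" "sphere_connected B" "p \<in> A" "p \<in> B"
  shows "sphere_connected (A \<union> B)"
  unfolding sphere_connected_def
proof
  assume "\<exists>X Y. sphere_open X \<and> sphere_open Y \<and> A \<union> B \<subseteq> X \<union> Y \<and>
      X \<inter> Y \<inter> (A \<union> B) = {} \<and> X \<inter> (A \<union> B) \<noteq> {} \<and> Y \<inter> (A \<union> B) \<noteq> {}"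
  then obtain X Y where XY: "sphere_open X" "sphere_open Y" "A \<union> B \<subseteq> X \<union> Y"
      "X \<inter> Y \<inter> (A \<union> B) = {}" "X \<inter> (A \<union> B) \<noteq> {}" "Y \<inter> (A \<union> B) \<noteq> {}" by blast
  have sep: "S \<subseteq> X \<or> S \<subseteq> Y" if "sphere_connected S" "S \<subseteq> A \<union> B" for S
  proof -
    have "\<not> (X \<inter> S \<noteq> {} \<and> Y \<inter> S \<noteq> {})"
    proof
      assume "X \<inter> S \<noteq> {} \<and> Y \<inter> S \<noteq> {}"
      moreover have "S \<subseteq> X \<union> Y" "X \<inter> Y \<inter> S = {}" using that XY(3,4) by blast+
      ultimately show False using that(1) XY(1,2) unfolding sphere_connected_def by blast
    qed
    then show ?thesis using that(2) XY(3) by blast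
  qed
  have "A \<subseteq> X \<or> A \<subseteq> Y" "B \<subseteq> X \<or> B \<subseteq> Y" using sep assms(1,2) by blast+
  then show False using XY(4,5,6) assms(3,4) by blast
qed

lemma comp_nbhd: assumes "fatou_component Fm U" "\<kappa> z0 \<in> U" "chart_cont \<kappa>"
  shows "\<exists>r>0. \<kappa> ` ball z0 r \<subseteq> U"
proof -
  have "\<kappa> z0 \<in> fatou_set Fm" using assms(1,2) unfolding fatou_component_def by blast
  then obtain V where V: "sphere_open V" "\<kappa> z0 \<in> V" "normal_iterates_on Fm V"
    unfolding fatou_set_def by blast
  have Vf: "V \<subseteq> fatou_set Fm" using V unfolding fatou_set_def by blast
  obtain e where e: "e > 0" "\<forall>q. chordal (\<kappa> z0) q < e \<longrightarrow> q \<in> V"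
    using V unfolding sphere_open_def by blast
  have "eventually (\<lambda>w. chordal (\<kappa> z0) (\<kappa> w) < e) (nhds z0)"
    using assms(3) e(1) unfolding chart_cont_def by blast
  then obtain r where r: "r > 0" "\<forall>w. dist w z0 < r \<longrightarrow> chordal (\<kappa> z0) (\<kappa> w) < e"
    unfolding eventually_nhds_metric by blast
  define W where "W = \<kappa> ` ball z0 r"
  have WV: "W \<subseteq> V" using r e unfolding W_def by (auto simp: dist_commute)
  have Wc: "sphere_connected W" unfolding W_def by (rule conn_img[OF assms(3) connected_ball])
  have "z0 \<in> ball z0 r" using r by simp
  then have "\<kappa> z0 \<in> W" unfolding W_def by blast
  then have "sphere_connected (U \<union> W)"
    using conn_union[OF _ Wc assms(2)] assms(1) unfolding fatou_component_def by blast
  moreover have "U \<union> W \<subseteq> fatou_set Fm" using WV Vf assms(1) unfolding fatou_component_def by blast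
  ultimately have "U \<union> W = U" using assms(1) unfolding fatou_component_def by blast
  then show ?thesis using r W_def by blast
qed

lemma chordal_SS: "chordal (Some z) (Some w) \<le> 2 * cmod (z - w)"
proof -
  have s1: "1 \<le> sqrt (1 + (cmod z)\<^sup>2)" "1 \<le> sqrt (1 + (cmod w)\<^sup>2)" by auto
  then have "1 \<le> sqrt (1 + (cmod z)\<^sup>2) * sqrt (1 + (cmod w)\<^sup>2)"
    using mult_mono[OF s1] by simp
  then show ?thesis unfolding chordal_def
    by (simp add: divide_le_eq mult_le_cancel_left1)
qed

lemma chordal_NS: "w \<noteq> 0 \<Longrightarrow> chordal None (Some (1/w)) \<le> 2 * cmod w"
proof -
  assume w: "w \<noteq> 0"
  have "cmod (1/w) \<le> sqrt (1 + (cmod (1/w))\<^sup>2)"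
    by (rule real_le_rsqrt) simp
  moreover have "cmod (1/w) > 0" using w by simp
  ultimately have "2 / sqrt (1 + (cmod (1/w))\<^sup>2) \<le> 2 / cmod (1/w)"
  proof (intro divide_left_mono)
    show "0 < sqrt (1 + (cmod (1 / w))\<^sup>2) * cmod (1 / w)"
      using \<open>cmod (1/w) > 0\<close> by (intro mult_pos_pos) (auto intro: add_pos_nonneg)
  qed (use \<open>cmod (1/w) \<le> _\<close> in auto)
  also have "\<dots> = 2 * cmod w" using w by (simp add: norm_divide)
  finally show ?thesis unfolding chordal_def by simp
qed

lemma chart_cont_Some: "chart_cont Some"
  unfolding chart_cont_def
proof (intro allI impI)
  fix z :: complex and e :: real assume "e > 0"
  then have "eventually (\<lambda>w. dist w z < e/2) (nhds z)"
    unfolding eventually_nhds_metric by (intro exI[of _ "e/2"]) auto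
  then show "eventually (\<lambda>w. chordal (Some z) (Some w) < e) (nhds z)"
  proof eventually_elim
    case (elim w) then show ?case using chordal_SS[of z w] by (simp add: dist_norm norm_minus_commute)
  qed
qed

lemma chart_cont_inf: "chart_cont inf_chart"
  unfolding chart_cont_def
proof (intro allI impI)
  fix z :: complex and e :: real assume e: "e > 0"
  show "eventually (\<lambda>w. chordal (inf_chart z) (inf_chart w) < e) (nhds z)"
  proof (cases "z = 0")
    case True
    have "eventually (\<lambda>w. dist w z < e/2) (nhds z)"
      using e unfolding eventually_nhds_metric by (intro exI[of _ "e/2"]) auto
    then show ?thesis
    proof eventually_elim
      case (elim w)
      show ?case
      proof (cases "w = 0")
        case True then show ?thesis using e \<open>z = 0\<close> by (simp add: inf_chart_def chordal_def)
      next
        case False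
        then show ?thesis using chordal_NS[of w] elim \<open>z = 0\<close> by (simp add: inf_chart_def dist_norm)
      qed
    qed
  next
    case False
    have "((\<lambda>w. 1/w) \<longlongrightarrow> 1/z) (nhds z)"
      using False by (intro tendsto_intros filterlim_ident) 
    then have ev1: "eventually (\<lambda>w. dist (1/w) (1/z) < e/2) (nhds z)"
      using e unfolding tendsto_iff by (metis half_gt_zero)
    have ev2: "eventually (\<lambda>w. w \<noteq> 0) (nhds z)"
      using False unfolding eventually_nhds_metric
      by (intro exI[of _ "cmod z"]) (auto simp: dist_norm)
    from ev1 ev2 show ?thesis
    proof eventually_elim
      case (elim w)
      then show ?case using chordal_SS[of "1/z" "1/w"] False
        by (simp add: inf_chart_def dist_norm norm_minus_commute)
    qed
  qed
qed



lemma cont_ev_ne: fixes f :: "complex \<Rightarrow> complex"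
  assumes "isCont f x" "f x \<noteq> 0" shows "eventually (\<lambda>w. f w \<noteq> 0) (nhds x)"
proof -
  obtain e where "e>0" "\<forall>y. dist x y < e \<longrightarrow> f y \<noteq> 0" using continuous_at_avoid[OF assms] by blast
  then show ?thesis unfolding eventually_nhds_metric by (metis dist_commute)
qed

locale stm =
  fixes a b c d :: complex
  assumes a0: "a \<noteq> 0" and c0: "c \<noteq> 0" and D0: "a * d - b * c \<noteq> 0"
begin

definition "DD = a * d - b * c"
definition "Q z = (c*z+d)^2 - c*(a*z+b)"
definition "P z = (a*z+b)*(Q z)^2 / (DD*(c*z+d)^3)"
definition "R z = z - P z"
definition "F = sphere_ext (Stirling (mobius a b c d))"

lemma DD0: "DD \<noteq> 0" using D0 by (simp add: DD_def)

lemma pole_iff: "c*z+d = 0 \<longleftrightarrow> z = -d/c"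
proof
  assume "c*z+d = 0" then have "c*z = -d" by (simp add: eq_neg_iff_add_eq_0)
  then show "z = -d/c" using c0 by (simp add: field_simps)
next
  assume "z = -d/c" then show "c*z+d = 0" using c0 by simp
qed

lemma deriv_mob: assumes "c*w+d \<noteq> 0"
  shows "deriv (mobius a b c d) w = DD/(c*w+d)^2"
proof -
  have "(mobius a b c d has_field_derivative (a*(c*w+d) - (a*w+b)*c)/(c*w+d)^2) (at w)"
    unfolding mobius_def[abs_def] using assms
    by (auto intro!: derivative_eq_intros simp: power2_eq_square)
  then show ?thesis by (simp add: DERIV_imp_deriv DD_def algebra_simps)
qed

lemma St_eq: assumes "c*z+d \<noteq> 0" "Q z \<noteq> 0"
  shows "Stirling (mobius a b c d) z = R z"
proof -
  define w where "w = z - mobius a b c d z"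
  have cw: "c*w+d = Q z/(c*z+d)"
    using assms by (simp add: w_def mobius_def Q_def field_simps power2_eq_square)
  have "c*w+d \<noteq> 0" using cw assms by simp
  then have der: "deriv (mobius a b c d) w = DD/(Q z/(c*z+d))^2" by (simp add: deriv_mob cw)
  have "Stirling (mobius a b c d) z = z - mobius a b c d z / (DD/(Q z/(c*z+d))^2)"
    unfolding Stirling_def w_def[symmetric] der ..
  also have "\<dots> = R z"
  proof -
    have gen: "x/t/(DD/(q/t)^2) = x*q^2/(DD*t^3)" if "t \<noteq> 0" for x t q :: complex
      using that DD0 by (simp add: field_simps power2_eq_square power3_eq_cube)
    show ?thesis unfolding R_def P_def mobius_def using gen assms(1) by simp
  qed
  finally show ?thesis .
qed

lemma Qm: "Q (-d/c) \<noteq> 0" using c0 D0 by (simp add: Q_def field_simps)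

lemma Q_hol: "Q holomorphic_on UNIV" unfolding Q_def[abs_def] by (intro holomorphic_intros)

lemma ev_good: "eventually (\<lambda>z. c*z+d \<noteq> 0 \<and> Q z \<noteq> 0) (at z0)"
proof -
  have "\<forall>\<^sub>F w in (at z0). Q w\<noteq>0 \<and> w\<in>UNIV"
    by (rule non_zero_neighbour_alt[OF Q_hol _ _ _ _ Qm]) auto
  moreover have "eventually (\<lambda>z. z \<noteq> -d/c) (at z0)"
  proof (cases "z0 = -d/c")
    case True then show ?thesis by (simp add: eventually_at_filter)
  next
    case False then show ?thesis
      using tendsto_imp_eventually_ne[OF tendsto_ident_at False] by simp
  qed
  ultimately show ?thesis by eventually_elim (simp add: pole_iff)
qed

lemma ev_St: "eventually (\<lambda>z. Stirling (mobius a b c d) z = R z) (at z0)"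
  using ev_good[of z0] by eventually_elim (simp add: St_eq)

lemma R_cont: "c*z0+d \<noteq> 0 \<Longrightarrow> isCont R z0"
  unfolding R_def[abs_def] P_def[abs_def] Q_def[abs_def] using DD0
  by (intro continuous_intros) auto

lemma F_Some: assumes "c*z0+d \<noteq> 0" shows "F (Some z0) = Some (R z0)"
proof -
  have "(R \<longlongrightarrow> R z0) (at z0)" using R_cont[OF assms] isCont_def by blast
  then have t: "(Stirling (mobius a b c d) \<longlongrightarrow> R z0) (at z0)"
    using tendsto_cong[OF ev_St] by blast
  then show ?thesis unfolding F_def sphere_ext_def using tendsto_Lim[OF _ t] by auto
qed

lemma F_pole: "F (Some (-d/c)) = None"
proof -
  define z0 where "z0 = -d/c"
  have cz: "c*z0+d = 0" using c0 by (simp add: z0_def)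
  have N0: "-((a*z0+b)*(Q z0)^2) \<noteq> 0"
  proof -
    have "a*z0+b \<noteq> 0" using c0 D0 by (simp add: z0_def field_simps)
    then show ?thesis using Qm by (simp add: z0_def)
  qed
  have "((\<lambda>z. -((a*z+b)*(Q z)^2)) \<longlongrightarrow> -((a*z0+b)*(Q z0)^2)) (at z0)"
    unfolding Q_def by (intro tendsto_intros)
  moreover have "filterlim (\<lambda>z. DD*(c*z+d)^3) (at 0) (at z0)"
  proof (rule filterlim_atI)
    have "((\<lambda>z. DD*(c*z+d)^3) \<longlongrightarrow> DD*(c*z0+d)^3) (at z0)" by (intro tendsto_intros)
    then show "((\<lambda>z. DD*(c*z+d)^3) \<longlongrightarrow> 0) (at z0)" using cz by simp
    show "\<forall>\<^sub>F x in at z0. DD * (c * x + d) ^ 3 \<noteq> 0"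
      using ev_good[of z0] by eventually_elim (simp add: DD0)
  qed
  ultimately have "filterlim (\<lambda>z. -((a*z+b)*(Q z)^2) / (DD*(c*z+d)^3)) at_infinity (at z0)"
    using filterlim_divide_at_infinity N0 by blast
  then have "filterlim (\<lambda>z. z + -((a*z+b)*(Q z)^2) / (DD*(c*z+d)^3)) at_infinity (at z0)"
    by (intro tendsto_add_filterlim_at_infinity[OF tendsto_ident_at])
  moreover have "R = (\<lambda>z. z + -((a*z+b)*(Q z)^2) / (DD*(c*z+d)^3))"
    by (rule ext) (simp add: R_def P_def)
  ultimately have inf: "filterlim R at_infinity (at z0)" by simp
  have "\<not> (\<exists>L. (Stirling (mobius a b c d) \<longlongrightarrow> L) (at z0))"
  proof
    assume "\<exists>L. (Stirling (mobius a b c d) \<longlongrightarrow> L) (at z0)"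
    then obtain L where "(Stirling (mobius a b c d) \<longlongrightarrow> L) (at z0)" by blast
    then have "(R \<longlongrightarrow> L) (at z0)" using tendsto_cong[OF ev_St] by blast
    then show False using not_tendsto_and_filterlim_at_infinity[OF _ _ inf] by auto
  qed
  then show ?thesis unfolding F_def sphere_ext_def z0_def by auto
qed

definition "qq w = (c+d*w)^2 - c*w*(a+b*w)"
definition "den w = DD*w*(c+d*w)^3 - (a+b*w)*(qq w)^2"
definition "G w = DD*(c+d*w)^3 / den w"
definition "h0 w = w^2 * G w"

lemma den0: "den 0 \<noteq> 0" using a0 c0 by (simp add: den_def qq_def)

lemma R_inv: assumes "w \<noteq> 0" "c+d*w \<noteq> 0" shows "R (1/w) = 1 / h0 w"
proof -
  have Qw: "Q (1/w) = qq w / w^2" using assms by (simp add: Q_def qq_def field_simps power2_eq_square)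
  have gen: "1/w - (A/w)*(q/w^2)^2/(DD*(T/w)^3) = (DD*w*T^3 - A*q^2)/(DD*w^2*T^3)"
    if "T \<noteq> 0" for A q T using that assms(1) DD0 by (simp add: field_simps power2_eq_square power3_eq_cube)
  have e1: "a*(1/w)+b = (a+b*w)/w" "c*(1/w)+d = (c+d*w)/w" using assms by (auto simp: field_simps)
  have "R (1/w) = den w / (DD*w^2*(c+d*w)^3)"
    unfolding R_def P_def Qw den_def e1 using gen[OF assms(2)] by simp
  also have "\<dots> = 1 / h0 w" by (simp add: h0_def G_def field_simps)
  finally show ?thesis .
qed

lemma ev0: "eventually (\<lambda>w. c+d*w \<noteq> 0 \<and> qq w \<noteq> 0 \<and> den w \<noteq> 0) (nhds 0)"
proof -
  have "isCont (\<lambda>w. c+d*w) 0" "isCont qq 0" "isCont den 0"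
    unfolding qq_def[abs_def] den_def[abs_def] by (intro continuous_intros)+
  moreover have "c+d*0 \<noteq> 0" "qq 0 \<noteq> 0" "den 0 \<noteq> 0" using c0 den0 by (auto simp: qq_def)
  ultimately have "eventually (\<lambda>w. c+d*w \<noteq> 0) (nhds 0)" "eventually (\<lambda>w. qq w \<noteq> 0) (nhds 0)"
     "eventually (\<lambda>w. den w \<noteq> 0) (nhds 0)"
    by (auto intro: cont_ev_ne)
  then show ?thesis by eventually_elim auto
qed

lemma Qw: "w \<noteq> 0 \<Longrightarrow> Q (1/w) = qq w / w^2"
  by (simp add: Q_def qq_def field_simps power2_eq_square)

lemma G_cont: "isCont G 0"
  unfolding G_def[abs_def] using den0 unfolding den_def[abs_def] qq_def[abs_def]
  by (intro continuous_intros) auto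

lemma ev0': "eventually (\<lambda>w. w \<noteq> 0 \<and> c*(1/w)+d \<noteq> 0 \<and> h0 w \<noteq> 0 \<and>
    Q (1/w) \<noteq> 0 \<and> R (1/w) = 1 / h0 w) (at 0)"
proof -
  have "eventually (\<lambda>w. w \<noteq> 0) (at (0::complex))" by (simp add: eventually_at_filter)
  moreover have "eventually (\<lambda>w. c+d*w \<noteq> 0 \<and> qq w \<noteq> 0 \<and> den w \<noteq> 0) (at 0)"
    using ev0 by (simp add: eventually_at_filter eventually_mono)
  ultimately show ?thesis
  proof eventually_elim
    case (elim w)
    have "c*(1/w)+d = (c+d*w)/w" using elim by (simp add: field_simps)
    then show ?case using elim R_inv[of w] Qw[of w] DD0 by (simp add: h0_def G_def)
  qed
qed

lemma F_None: "F None = None"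
proof -
  have "(h0 \<longlongrightarrow> h0 0) (at 0)"
  proof -
    have "isCont h0 0" unfolding h0_def[abs_def] using G_cont by (intro continuous_intros) auto
    then show ?thesis by (simp add: isCont_def)
  qed
  then have "filterlim h0 (at 0) (at 0)"
    using ev0' by (intro filterlim_atI) (auto simp: h0_def elim: eventually_mono)
  then have inf: "filterlim (\<lambda>w. inverse (h0 w)) at_infinity (at 0)"
    using filterlim_compose[OF filterlim_inverse_at_infinity] by blast
  have ev: "eventually (\<lambda>w. Stirling (mobius a b c d) (1/w) = inverse (h0 w)) (at 0)"
    using ev0' by eventually_elim (simp add: St_eq divide_inverse)
  have "\<not> (\<exists>L. ((\<lambda>w. Stirling (mobius a b c d) (1/w)) \<longlongrightarrow> L) (at 0))"
  proof
    assume "\<exists>L. ((\<lambda>w. Stirling (mobius a b c d) (1/w)) \<longlongrightarrow> L) (at 0)"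
    then obtain L where "((\<lambda>w. Stirling (mobius a b c d) (1/w)) \<longlongrightarrow> L) (at 0)" by blast
    then have "((\<lambda>w. inverse (h0 w)) \<longlongrightarrow> L) (at 0)" using tendsto_cong[OF ev] by blast
    then show False using not_tendsto_and_filterlim_at_infinity[OF _ _ inf] by auto
  qed
  then show ?thesis unfolding F_def sphere_ext_def by auto
qed

lemma ev_chart_inf: "eventually (\<lambda>w. F (inf_chart w) = inf_chart (h0 w)) (nhds 0)"
proof -
  have "eventually (\<lambda>w. w \<noteq> 0 \<longrightarrow> F (inf_chart w) = inf_chart (h0 w)) (nhds 0)"
    using ev0' unfolding eventually_at_filter
  proof eventually_elim
    case (elim w)
    then show ?case
      using F_Some[of "1/w"] by (auto simp: inf_chart_def)
  qed
  then show ?thesis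
    by eventually_elim (auto simp: F_None inf_chart_def h0_def)
qed

lemma h0_deriv: "(h0 has_field_derivative 0) (at 0)"
proof -
  have "den holomorphic_on UNIV"
    unfolding den_def[abs_def] qq_def[abs_def] by (intro holomorphic_intros)
  then have "\<exists>E. (den has_field_derivative E) (at 0)"
    using holomorphic_on_imp_differentiable_at[of den UNIV 0] by (auto simp: field_differentiable_def)
  then obtain E where E: "(den has_field_derivative E) (at 0)" by blast
  have "(\<lambda>w. DD*(c+d*w)^3) holomorphic_on UNIV" by (intro holomorphic_intros)
  then have "\<exists>E. ((\<lambda>w. DD*(c+d*w)^3) has_field_derivative E) (at 0)"
    using holomorphic_on_imp_differentiable_at[of _ UNIV 0] by (auto simp: field_differentiable_def)
  then obtain E2 where E2: "((\<lambda>w. DD*(c+d*w)^3) has_field_derivative E2) (at 0)" by blast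
  obtain G' where "(G has_field_derivative G') (at 0)"
    using DERIV_divide[OF E2 E den0] unfolding G_def[abs_def] by blast
  then have "((\<lambda>w. w^2 * G w) has_field_derivative (2*0*G 0 + 0^2*G')) (at 0)"
    by (auto intro!: derivative_eq_intros)
  then show ?thesis unfolding h0_def[abs_def] by simp
qed

lemma R_fix_deriv: assumes cz: "c*z0+d \<noteq> 0" and fx: "R z0 = z0"
  shows "(R has_field_derivative 0) (at z0) \<or> (R has_field_derivative 1) (at z0)"
proof -
  define t where "t = c*z0+d"
  have t0: "t \<noteq> 0" using cz t_def by simp
  have dQ: "(Q has_field_derivative (2*c*t - c*a)) (at z0)"
    unfolding Q_def[abs_def] t_def
    by (auto intro!: derivative_eq_intros simp: algebra_simps)
  have dN: "((\<lambda>z. (a*z+b)*(Q z)^2) has_field_derivative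
       (a*(Q z0)^2 + (a*z0+b)*(2*Q z0*(2*c*t - c*a)))) (at z0)"
    by (auto intro!: derivative_eq_intros dQ simp: algebra_simps)
  have dD: "((\<lambda>z. DD*(c*z+d)^3) has_field_derivative (DD*(3*t^2*c))) (at z0)"
    unfolding t_def by (auto intro!: derivative_eq_intros simp: algebra_simps)
  define Nd where "Nd = a*(Q z0)^2 + (a*z0+b)*(2*Q z0*(2*c*t - c*a))"
  define Pd where "Pd = (Nd * (DD*t^3) - (a*z0+b)*(Q z0)^2 * (DD*(3*t^2*c))) / (DD*t^3 * (DD*t^3))"
  have "(P has_field_derivative Pd) (at z0)"
    using DERIV_divide[OF dN dD] t0 DD0 unfolding P_def[abs_def] Pd_def Nd_def t_def by simp
  then have dR: "(R has_field_derivative 1 - Pd) (at z0)"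
    unfolding R_def[abs_def] by (auto intro!: derivative_eq_intros)
  have "P z0 = 0" using fx by (simp add: R_def)
  then have "(a*z0+b)*(Q z0)^2 = 0" using t0 DD0 by (simp add: P_def t_def[symmetric])
  then have "a*z0+b = 0 \<or> Q z0 = 0" by simp
  then have "Pd = 1 \<or> Pd = 0"
  proof
    assume h: "a*z0+b = 0"
    then have b: "b = -a*z0" by (simp add: eq_neg_iff_add_eq_0 add.commute)
    have Qt: "Q z0 = t^2" using h by (simp add: Q_def t_def)
    have "a*d - b*c = a*t" using b by (simp add: t_def algebra_simps)
    then have DDt: "DD = a*t" by (simp add: DD_def)
    have "Pd = a*t^4 * (DD*t^3) / (DD*t^3*(DD*t^3))" using h by (simp add: Pd_def Nd_def Qt power_mult_distrib[symmetric] flip: power_mult)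
    also have "\<dots> = 1" using t0 a0 by (simp add: DDt field_simps) (simp add: power_def)
    finally show ?thesis by simp
  next
    assume "Q z0 = 0" then show ?thesis by (simp add: Pd_def Nd_def)
  qed
  then show ?thesis using dR by auto
qed

lemma ev_chart_fin: assumes "c*z0+d \<noteq> 0"
  shows "eventually (\<lambda>z. c*z+d \<noteq> 0 \<and> F (Some z) = Some (R z)) (nhds z0)"
proof -
  have "isCont (\<lambda>z. c*z+d) z0" by (intro continuous_intros)
  from cont_ev_ne[OF this assms] show ?thesis by eventually_elim (simp add: F_Some)
qed

lemma fixed_Some: assumes "F (Some z0) = Some z0" shows "c*z0+d \<noteq> 0" "R z0 = z0"
proof -
  show cz: "c*z0+d \<noteq> 0"
  proof
    assume "c*z0+d = 0" then have "z0 = -d/c" using pole_iff by blast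
    then show False using assms F_pole by simp
  qed
  show "R z0 = z0" using assms F_Some[OF cz] by simp
qed

lemma mult_01: assumes "fixed_point_multiplier F p lam" shows "lam = 0 \<or> lam = 1"
proof (cases p)
  case None
  have "eventually (\<lambda>w. (case F (inf_chart w) of Some v \<Rightarrow> 1 / v | None \<Rightarrow> 0) = h0 w) (nhds 0)"
    using ev_chart_inf by eventually_elim (auto simp: inf_chart_def)
  moreover have "((\<lambda>w. case F (inf_chart w) of Some v \<Rightarrow> 1 / v | None \<Rightarrow> 0) has_field_derivative lam) (at 0)"
    using assms None by (simp add: fixed_point_multiplier_def)
  ultimately have "(h0 has_field_derivative lam) (at 0)" by (subst (asm) DERIV_cong_ev[OF refl _ refl])
  then show ?thesis using DERIV_unique h0_deriv by blast
next
  case (Some z0)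
  have fx: "F (Some z0) = Some z0" using assms Some by (simp add: fixed_point_multiplier_def)
  note fs = fixed_Some[OF fx]
  have "eventually (\<lambda>z. (case F (Some z) of Some v \<Rightarrow> v | None \<Rightarrow> 0) = R z) (nhds z0)"
    using ev_chart_fin[OF fs(1)] by eventually_elim auto
  moreover have "((\<lambda>z. case F (Some z) of Some v \<Rightarrow> v | None \<Rightarrow> 0) has_field_derivative lam) (at z0)"
    using assms Some by (simp add: fixed_point_multiplier_def)
  ultimately have "(R has_field_derivative lam) (at z0)" by (subst (asm) DERIV_cong_ev[OF refl _ refl])
  then show ?thesis using DERIV_unique R_fix_deriv[OF fs] by blast
qed

end


lemma conj_contra:
  fixes f g :: "complex \<Rightarrow> complex"
  assumes hol: "f holomorphic_on ball z0 r" and r: "r > 0" and inj: "inj_on f (ball z0 r)"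
    and dg: "(g has_field_derivative L) (at z0)" and gz: "g z0 = z0"
    and ev: "eventually (\<lambda>z. f (g z) = e * f z) (nhds z0)"
  shows "L = e"
proof -
  have z0: "z0 \<in> ball z0 r" using r by simp
  have nz: "deriv f z0 \<noteq> 0" by (rule holomorphic_injective_imp_regular[OF hol open_ball inj z0])
  have df: "(f has_field_derivative deriv f z0) (at z0)" by (rule holomorphic_derivI[OF hol open_ball z0])
  have "(f \<circ> g has_field_derivative deriv f z0 * L) (at z0)"
    by (rule DERIV_chain) (use df gz dg in simp_all)
  then have d1: "((\<lambda>z. f (g z)) has_field_derivative deriv f z0 * L) (at z0)" by (simp add: o_def)
  have "((\<lambda>z. e * f z) has_field_derivative e * deriv f z0) (at z0)"
    by (rule DERIV_cmult[OF df])
  then have "((\<lambda>z. f (g z)) has_field_derivative e * deriv f z0) (at z0)"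
    by (subst DERIV_cong_ev[OF refl ev refl])
  then have "deriv f z0 * L = e * deriv f z0" using DERIV_unique d1 by blast
  then show ?thesis using nz by (simp add: mult.commute)
qed

lemma exp_irr: fixes \<theta> :: real assumes "\<theta> \<notin> \<rat>"
  shows "exp (2 * complex_of_real pi * \<i> * complex_of_real \<theta>) \<noteq> 0"
    "exp (2 * complex_of_real pi * \<i> * complex_of_real \<theta>) \<noteq> 1"
proof -
  show "exp (2 * complex_of_real pi * \<i> * complex_of_real \<theta>) \<noteq> 0" by simp
  show "exp (2 * complex_of_real pi * \<i> * complex_of_real \<theta>) \<noteq> 1"
  proof
    assume "exp (2 * complex_of_real pi * \<i> * complex_of_real \<theta>) = 1"
    then obtain n :: int where "2 * pi * \<theta> = of_int (2*n) * pi" unfolding exp_eq_1 by auto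
    then have "\<theta> = of_int n" by (simp add: field_simps)
    then show False using assms by simp
  qed
qed

context stm begin

lemma no_iifp: "\<not> irrationally_indifferent_fixed_point F p"
proof
  assume "irrationally_indifferent_fixed_point F p"
  then obtain \<theta> :: real where th: "\<theta> \<notin> \<rat>"
    "fixed_point_multiplier F p (exp (2 * complex_of_real pi * \<i> * complex_of_real \<theta>))"
    unfolding irrationally_indifferent_fixed_point_def by blast
  show False using mult_01[OF th(2)] exp_irr[OF th(1)] by simp
qed

lemma no_siegel: "\<not> invariant_siegel_disc F U"
proof
  assume S: "invariant_siegel_disc F U"
  then obtain \<phi> and \<theta> :: real where th: "\<theta> \<notin> \<rat>" and bij: "bij_betw \<phi> U (ball 0 1)"
    and hol: "sphere_holomorphic_on \<phi> U"
    and rel: "\<forall>p\<in>U. \<phi> (F p) = exp (2 * complex_of_real pi * \<i> * complex_of_real \<theta>) * \<phi> p"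
    unfolding invariant_siegel_disc_def by blast
  define e where "e = exp (2 * complex_of_real pi * \<i> * complex_of_real \<theta>)"
  have e0: "e \<noteq> 0" "e \<noteq> 1" using exp_irr[OF th] by (auto simp: e_def)
  have fc: "fatou_component F U" and FU: "F ` U = U" using S unfolding invariant_siegel_disc_def by auto
  have inj: "inj_on \<phi> U" using bij bij_betw_imp_inj_on by blast
  obtain p0 where p0: "p0 \<in> U" "\<phi> p0 = 0"
    using bij unfolding bij_betw_def by (metis centre_in_ball imageE zero_less_one)
  have Fp0: "F p0 \<in> U" using FU p0 by blast
  have "\<phi> (F p0) = \<phi> p0" using rel p0 by (simp add: e_def)
  then have fix0: "F p0 = p0" using inj Fp0 p0(1) by (meson inj_onD)
  show False
  proof (cases p0)
    case None
    obtain r where r: "r > 0" "inf_chart ` ball 0 r \<subseteq> U"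
      using comp_nbhd[OF fc _ chart_cont_inf, of 0] p0 None by (auto simp: inf_chart_def)
    define f where "f w = \<phi> (inf_chart w)" for w
    have "f holomorphic_on {w. inf_chart w \<in> U}" using hol unfolding sphere_holomorphic_on_def f_def by simp
    then have hf: "f holomorphic_on ball 0 r" by (rule holomorphic_on_subset) (use r in blast)
    have ic_inj: "inj inf_chart" unfolding inj_def inf_chart_def by (auto split: if_splits)
    have injf: "inj_on f (ball 0 r)"
      unfolding f_def using inj r(2) ic_inj
      by (smt (verit, ccfv_SIG) image_subset_iff inj_def inj_onD inj_onI)
    have evb: "eventually (\<lambda>w. w \<in> ball 0 r) (nhds 0)"
      using r(1) by (intro eventually_nhds_in_open) auto
    have ev: "eventually (\<lambda>w. f (h0 w) = e * f w) (nhds 0)"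
      using evb ev_chart_inf
    proof eventually_elim
      case (elim w)
      then have "inf_chart w \<in> U" using r(2) by blast
      then show ?case using rel elim(2) by (metis f_def e_def)
    qed
    have "h0 0 = 0" by (simp add: h0_def)
    then have "0 = e" using conj_contra[OF hf r(1) injf h0_deriv _ ev] by simp
    then show False using e0 by simp
  next
    case (Some z0)
    note fs = fixed_Some[OF fix0[unfolded Some]]
    obtain r where r: "r > 0" "Some ` ball z0 r \<subseteq> U"
      using comp_nbhd[OF fc _ chart_cont_Some, of z0] p0 Some by auto
    define f where "f z = \<phi> (Some z)" for z
    have "f holomorphic_on {z. Some z \<in> U}" using hol unfolding sphere_holomorphic_on_def f_def by simp
    then have hf: "f holomorphic_on ball z0 r" by (rule holomorphic_on_subset) (use r in blast)
    have injf: "inj_on f (ball z0 r)"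
      unfolding f_def using inj r(2) by (smt (verit) image_subset_iff inj_onD inj_onI option.inject)
    have evb: "eventually (\<lambda>w. w \<in> ball z0 r) (nhds z0)"
      using r(1) by (intro eventually_nhds_in_open) auto
    have ev: "eventually (\<lambda>z. f (R z) = e * f z) (nhds z0)"
      using evb ev_chart_fin[OF fs(1)]
    proof eventually_elim
      case (elim z)
      then have "Some z \<in> U" using r(2) by blast
      then show ?case using rel elim(2) by (metis f_def e_def)
    qed
    from R_fix_deriv[OF fs] show False
    proof
      assume "(R has_field_derivative 0) (at z0)"
      then have "0 = e" using conj_contra[OF hf r(1) injf _ fs(2) ev] by simp
      then show False using e0 by simp
    next
      assume "(R has_field_derivative 1) (at z0)"
      then have "1 = e" using conj_contra[OF hf r(1) injf _ fs(2) ev] by simp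
      then show False using e0 by simp
    qed
  qed
qed

end

theorem mainTheorem12:
  fixes a b c d :: complex
  assumes "a \<noteq> 0" and "c \<noteq> 0" and "a * d - b * c \<noteq> 0"
  shows "\<not> (\<exists>p. irrationally_indifferent_fixed_point
                 (sphere_ext (Stirling (mobius a b c d))) p)
       \<and> \<not> (\<exists>U. invariant_siegel_disc (sphere_ext (Stirling (mobius a b c d))) U)"
proof -
  interpret stm a b c d using assms by unfold_locales
  show ?thesis using no_iifp no_siegel unfolding F_def by blast
qed

end
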